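(* Let $(X,\mathrm{dist})$ be a distance space, $r_1<r_2$, and $\mathcal{H}$ an $(r_1,r_2,p_1,p_2)$-sensitive family of hash functions on $X$ with $0<p_1\le 1$. Let $k, L$ be positive integers, let $\varepsilon > 0$, and let $m$ be an integer with $m \ge \left\lceil \frac{1-p_1}{p_1}\cdot\frac{k}{\ln(1+\varepsilon)}\right\rceil$, $m\ge 1$. Let $h_{i,j}$ for $i\in[k]$, $j\in[m]$ be sampled independently from $\mathcal{H}$, and let $f_1,\dots,f_k\colon [L]\to[m]$ be pairwise independent hash functions, independent of each other and of the $h_{i,j}$. For $l\in[L]$ define $g_l(x) = (h_{1,f_1(l)}(x), \dots, h_{k,f_k(l)}(x))$. Then for every pair of points $x,y\in X$ with $\mathrm{dist}(x,y)\le r_1$, writing $p = \Pr_{h\sim\mathcal{H}}[h(x)=h(y)]$ and $\mu = L p^k$, we have $$\Pr[\nexists\, l\in[L] \colon g_l(x) = g_l(y)] \le \frac{1+\varepsilon\mu}{1+(1+\varepsilon)\mu}.$$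
   Context: Here $[n]=\{1,\dots,n\}$. A distribution $\mathcal{H}$ over functions $h\colon X \to R$ is $(r_1, r_2, p_1, p_2)$-sensitive if for all $x, y \in X$ and $h \sim \mathcal{H}$: if $\mathrm{dist}(x,y) \le r_1$ then $\Pr[h(x)=h(y)] \ge p_1$, and if $\mathrm{dist}(x,y) \ge r_2$ then $\Pr[h(x)=h(y)] \le p_2$. A family of functions $f\colon[L]\to[m]$ is pairwise independent if for distinct $l\neq l'$ the pair $(f(l),f(l'))$ is uniformly distributed on $[m]^2$. *)

theory Defs
  imports "HOL-Probability.Probability"
begin

definition distance_space :: "('a \<Rightarrow> 'a \<Rightarrow> real) \<Rightarrow> bool" where
  "distance_space d \<longleftrightarrow>
     (\<forall>x y. 0 \<le> d x y) \<and> (\<forall>x y. d x y = d y x) \<and> (\<forall>x. d x x = 0)"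

definition lsh_sensitive ::
  "('a \<Rightarrow> 'a \<Rightarrow> real) \<Rightarrow> real \<Rightarrow> real \<Rightarrow> real \<Rightarrow> real \<Rightarrow> ('a \<Rightarrow> 'b) pmf \<Rightarrow> bool" where
  "lsh_sensitive d r1 r2 p1 p2 H \<longleftrightarrow>
     (\<forall>x y. d x y \<le> r1 \<longrightarrow> measure_pmf.prob H {h. h x = h y} \<ge> p1) \<and>
     (\<forall>x y. d x y \<ge> r2 \<longrightarrow> measure_pmf.prob H {h. h x = h y} \<le> p2)"

definition pairwise_indep_family :: "nat \<Rightarrow> nat \<Rightarrow> (nat \<Rightarrow> nat) pmf \<Rightarrow> bool" where
  "pairwise_indep_family L m F \<longleftrightarrow>
     (\<forall>f\<in>set_pmf F. \<forall>l\<in>{1..L}. f l \<in> {1..m}) \<and>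
     (\<forall>l\<in>{1..L}. \<forall>l'\<in>{1..L}. l \<noteq> l' \<longrightarrow>
        map_pmf (\<lambda>f. (f l, f l')) F = pmf_of_set ({1..m} \<times> {1..m}))"

end

theory Submission
  imports Defs
begin

lemma integrable_pmf_bounded:
  fixes g :: "'x \<Rightarrow> real"
  assumes "\<And>z. \<bar>g z\<bar> \<le> B"
  shows "integrable (measure_pmf M) g"
  by (rule measure_pmf.integrable_const_bound[where B=B]) (use assms in auto)

lemma exp_pair_swap:
  fixes G :: "'x \<times> 'y \<Rightarrow> real"
  assumes nn: "\<And>z. 0 \<le> G z" and bd: "\<And>z. G z \<le> B"
  shows "measure_pmf.expectation (pair_pmf A C) G =
         measure_pmf.expectation C (\<lambda>c. measure_pmf.expectation A (\<lambda>a. G (a, c)))"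
proof -
  have B0: "0 \<le> B" using nn bd order_trans by blast
  have int: "integrable (measure_pmf M) g" if "\<And>z. 0 \<le> g z" "\<And>z. g z \<le> B" for M and g :: "'z \<Rightarrow> real"
  proof (rule integrable_pmf_bounded[where B=B])
    fix z show "\<bar>g z\<bar> \<le> B" using that[of z] by simp
  qed
  have inner_nn: "0 \<le> measure_pmf.expectation A (\<lambda>a. G (a, c))" for c
    using nn by (simp add: Bochner_Integration.integral_nonneg)
  have inner_bd: "measure_pmf.expectation A (\<lambda>a. G (a, c)) \<le> B" for c
  proof -
    have "measure_pmf.expectation A (\<lambda>a. G (a, c)) \<le> measure_pmf.expectation A (\<lambda>a. B)"
      by (intro integral_mono int) (use nn bd B0 in auto)
    then show ?thesis using nn[of "(undefined, c)"] bd[of "(undefined, c)"] by simp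
  qed
  have "ennreal (measure_pmf.expectation (pair_pmf A C) G) = (\<integral>\<^sup>+z. ennreal (G z) \<partial>pair_pmf A C)"
    by (rule nn_integral_eq_integral[symmetric]) (auto intro: int nn bd B0)
  also have "\<dots> = (\<integral>\<^sup>+z. ennreal (G z) \<partial>map_pmf (\<lambda>(x, y). (y, x)) (pair_pmf C A))"
    by (simp add: pair_commute_pmf[of A C])
  also have "\<dots> = (\<integral>\<^sup>+z. ennreal (G (case z of (x, y) \<Rightarrow> (y, x))) \<partial>pair_pmf C A)"
    by simp
  also have "\<dots> = (\<integral>\<^sup>+c. \<integral>\<^sup>+a. ennreal (G (a, c)) \<partial>A \<partial>C)"
    by (simp add: nn_integral_pair_pmf')
  also have "\<dots> = (\<integral>\<^sup>+c. ennreal (measure_pmf.expectation A (\<lambda>a. G (a, c))) \<partial>C)"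
    by (intro nn_integral_cong nn_integral_eq_integral) (auto intro: int nn bd B0)
  also have "\<dots> = ennreal (measure_pmf.expectation C (\<lambda>c. measure_pmf.expectation A (\<lambda>a. G (a, c))))"
    by (rule nn_integral_eq_integral) (auto intro: int inner_nn inner_bd)
  finally show ?thesis
    using nn inner_nn by (subst (asm) ennreal_inj) (auto intro: Bochner_Integration.integral_nonneg)
qed
lemma core_hs:
  fixes H :: "'x pmf" and c :: "'x \<Rightarrow> real" and S :: "'i \<Rightarrow> 'j set"
  assumes c0: "\<And>v. 0 \<le> c v" and c1: "\<And>v. c v \<le> 1"
    and fin: "finite K" "finite J" and SJ: "\<And>i. i \<in> K \<Longrightarrow> S i \<subseteq> J"
  shows "measure_pmf.expectation (Pi_pmf (K \<times> J) dflt (\<lambda>_. H)) (\<lambda>h. \<Prod>i\<in>K. \<Prod>j\<in>S i. c (h (i, j)))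
       = (\<Prod>i\<in>K. (measure_pmf.expectation H c) ^ card (S i))"
proof -
  define g where "g = (\<lambda>(ij :: 'i \<times> 'j) v. if snd ij \<in> S (fst ij) then c v else 1)"
  have eq1: "(\<Prod>i\<in>K. \<Prod>j\<in>S i. u i j) = (\<Prod>ij\<in>K \<times> J. if snd ij \<in> S (fst ij) then u (fst ij) (snd ij) else 1)"
    for u :: "'i \<Rightarrow> 'j \<Rightarrow> real"
  proof -
    have "(\<Prod>i\<in>K. \<Prod>j\<in>S i. u i j) = (\<Prod>i\<in>K. \<Prod>j\<in>J. if j \<in> S i then u i j else 1)"
    proof (rule prod.cong[OF refl])
      fix i assume "i \<in> K"
      then have "J \<inter> S i = S i" using SJ by blast
      then show "(\<Prod>j\<in>S i. u i j) = (\<Prod>j\<in>J. if j \<in> S i then u i j else 1)"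
        using prod.inter_restrict[OF fin(2), of "u i" "S i"] by simp
    qed
    also have "\<dots> = (\<Prod>ij\<in>K \<times> J. if snd ij \<in> S (fst ij) then u (fst ij) (snd ij) else 1)"
      by (simp add: prod.cartesian_product case_prod_unfold)
    finally show ?thesis .
  qed
  have "measure_pmf.expectation (Pi_pmf (K \<times> J) dflt (\<lambda>_. H)) (\<lambda>h. \<Prod>i\<in>K. \<Prod>j\<in>S i. c (h (i, j)))
      = measure_pmf.expectation (Pi_pmf (K \<times> J) dflt (\<lambda>_. H)) (\<lambda>h. \<Prod>ij\<in>K \<times> J. g ij (h ij))"
    unfolding eq1 g_def by (simp only: prod.collapse case_prod_unfold)
  also have "\<dots> = (\<Prod>ij\<in>K \<times> J. measure_pmf.expectation H (g ij))"
  proof (rule expectation_prod_Pi_pmf)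
    show "finite (K \<times> J)" using fin by simp
    show "integrable (measure_pmf H) (g ij)" for ij
      by (rule integrable_pmf_bounded[where B=1]) (use c0 c1 in \<open>auto simp: g_def\<close>)
    show "0 \<le> g ij v" for ij v using c0 by (simp add: g_def)
  qed
  also have "\<dots> = (\<Prod>ij\<in>K \<times> J. if snd ij \<in> S (fst ij) then measure_pmf.expectation H c else 1)"
    by (intro prod.cong refl) (simp add: g_def)
  also have "\<dots> = (\<Prod>i\<in>K. \<Prod>j\<in>S i. measure_pmf.expectation H c)"
    by (rule eq1[symmetric])
  also have "\<dots> = (\<Prod>i\<in>K. (measure_pmf.expectation H c) ^ card (S i))"
    by simp
  finally show ?thesis .
qed
theorem lemma10:
  fixes d :: "'a \<Rightarrow> 'a \<Rightarrow> real"
    and H :: "('a \<Rightarrow> 'b) pmf"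
    and F :: "nat \<Rightarrow> (nat \<Rightarrow> nat) pmf"
    and r1 r2 p1 p2 \<epsilon> :: real
    and k L m :: nat
    and x y :: 'a
  assumes "distance_space d"
    and "r1 < r2"
    and "lsh_sensitive d r1 r2 p1 p2 H"
    and "0 < p1" and "p1 \<le> 1"
    and "0 < k" and "0 < L"
    and "0 < \<epsilon>"
    and "\<lceil>(1 - p1) / p1 * (real k / ln (1 + \<epsilon>))\<rceil> \<le> int m"
    and "1 \<le> m"
    and "\<And>i. i \<in> {1..k} \<Longrightarrow> pairwise_indep_family L m (F i)"
    and "d x y \<le> r1"
  shows
    "let p = measure_pmf.prob H {h. h x = h y};
         \<mu> = real L * p ^ k;
         hs = Pi_pmf ({1..k} \<times> {1..m}) undefined (\<lambda>_. H);
         fs = Pi_pmf {1..k} undefined F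
     in measure_pmf.prob (pair_pmf hs fs)
          {(h, f). \<not> (\<exists>l\<in>{1..L}. (\<forall>i\<in>{1..k}. h (i, f i l) x = h (i, f i l) y))}
        \<le> (1 + \<epsilon> * \<mu>) / (1 + (1 + \<epsilon>) * \<mu>)"
proof -
  define K where "K = {1..k}"
  define J where "J = {1..m}"
  define Ls where "Ls = {1..L}"
  define p where "p = measure_pmf.prob H {h. h x = h y}"
  define \<mu> where "\<mu> = real L * p ^ k"
  define hs where "hs = Pi_pmf (K \<times> J) undefined (\<lambda>_. H)"
  define fs where "fs = Pi_pmf K undefined F"
  define M where "M = pair_pmf hs fs"
  define E where "E = {(h :: nat \<times> nat \<Rightarrow> 'a \<Rightarrow> 'b, f :: nat \<Rightarrow> nat \<Rightarrow> nat). \<not> (\<exists>l\<in>Ls. (\<forall>i\<in>K. h (i, f i l) x = h (i, f i l) y))}"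
  define c :: "('a \<Rightarrow> 'b) \<Rightarrow> real" where "c = indicator {h. h x = h y}"
  define X where "X = (\<lambda>l (\<omega> :: ((nat \<times> nat) \<Rightarrow> 'a \<Rightarrow> 'b) \<times> (nat \<Rightarrow> nat \<Rightarrow> nat)). \<Prod>i\<in>K. c (fst \<omega> (i, snd \<omega> i l)))"
  define Z where "Z = (\<lambda>\<omega>. \<Sum>l\<in>Ls. X l \<omega>)"
  have finK: "finite K" and finJ: "finite J" and finLs: "finite Ls"
    by (auto simp: K_def J_def Ls_def)
  have cardK: "card K = k" and cardJ: "card J = m" and cardLs: "card Ls = L"
    by (auto simp: K_def J_def Ls_def)
  have c01: "c v = 0 \<or> c v = 1" for v by (simp add: c_def indicator_def)
  have c0: "0 \<le> c v" and c1: "c v \<le> 1" for v by (simp_all add: c_def indicator_def)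
  have pge: "p1 \<le> p" using assms(3,12) unfolding lsh_sensitive_def p_def by blast
  have ppos: "0 < p" using pge assms(4) by linarith
  have ple: "p \<le> 1" unfolding p_def by simp
  have Ec: "measure_pmf.expectation H c = p"
    unfolding c_def p_def by simp
  have suppF: "f i \<in> set_pmf (F i)" if "f \<in> set_pmf fs" "i \<in> K" for f i
    using that unfolding fs_def by (auto simp: set_Pi_pmf[OF finK] PiE_dflt_def)
  have suppJ: "f i l \<in> J" if "f \<in> set_pmf fs" "i \<in> K" "l \<in> Ls" for f i l
    using suppF[OF that(1,2)] assms(11)[of i] that(2,3)
    unfolding pairwise_indep_family_def K_def J_def Ls_def by blast
  have X0: "0 \<le> X l \<omega>" and X1: "X l \<omega> \<le> 1" for l \<omega>
    unfolding X_def using c0 c1 by (auto intro: prod_nonneg prod_le_1)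
  have intM: "integrable (measure_pmf N) g" if "\<And>z. 0 \<le> g z" "\<And>z. g z \<le> B" for N and g :: "'z \<Rightarrow> real" and B
  proof (rule integrable_pmf_bounded[where B=B])
    fix z show "\<bar>g z\<bar> \<le> B" using that[of z] by simp
  qed
  have E1: "measure_pmf.expectation M (X l) = p ^ k" if l: "l \<in> Ls" for l
  proof -
    have "measure_pmf.expectation M (X l) =
          measure_pmf.expectation fs (\<lambda>f. measure_pmf.expectation hs (\<lambda>h. X l (h, f)))"
      unfolding M_def by (rule exp_pair_swap[where B=1]) (use X0 X1 in auto)
    also have "\<dots> = measure_pmf.expectation fs (\<lambda>f. p ^ k)"
    proof (rule Bochner_Integration.integral_cong_AE)
      show "AE f in measure_pmf fs. measure_pmf.expectation hs (\<lambda>h. X l (h, f)) = p ^ k"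
      proof (rule AE_pmfI)
        fix f assume f: "f \<in> set_pmf fs"
        have "measure_pmf.expectation hs (\<lambda>h. X l (h, f)) =
              measure_pmf.expectation hs (\<lambda>h. \<Prod>i\<in>K. \<Prod>j\<in>{f i l}. c (h (i, j)))"
          by (simp add: X_def)
        also have "\<dots> = (\<Prod>i\<in>K. (measure_pmf.expectation H c) ^ card {f i l})"
          unfolding hs_def by (rule core_hs) (use c0 c1 finK finJ suppJ[OF f _ l] in auto)
        also have "\<dots> = p ^ k" by (simp add: Ec cardK)
        finally show "measure_pmf.expectation hs (\<lambda>h. X l (h, f)) = p ^ k" .
      qed
    qed auto
    also have "\<dots> = p ^ k" by simp
    finally show ?thesis .
  qed
  define q where "q = p\<^sup>2 + (p - p\<^sup>2) / real m"
  have E2: "measure_pmf.expectation M (\<lambda>\<omega>. X l \<omega> * X l' \<omega>) = q ^ k"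
    if l: "l \<in> Ls" and l': "l' \<in> Ls" and ll': "l \<noteq> l'" for l l'
  proof -
    define qf where "qf = (\<lambda>g :: nat \<Rightarrow> nat. if g l = g l' then p else p\<^sup>2)"
    have qf0: "0 \<le> qf g" and qf1: "qf g \<le> 1" for g
      using ppos ple by (auto simp: qf_def power_le_one)
    have "measure_pmf.expectation M (\<lambda>\<omega>. X l \<omega> * X l' \<omega>) =
          measure_pmf.expectation fs (\<lambda>f. measure_pmf.expectation hs (\<lambda>h. X l (h, f) * X l' (h, f)))"
      unfolding M_def by (rule exp_pair_swap[where B=1]) (use X0 X1 in \<open>auto intro: mult_le_one\<close>)
    also have "\<dots> = measure_pmf.expectation fs (\<lambda>f. \<Prod>i\<in>K. qf (f i))"
    proof (rule Bochner_Integration.integral_cong_AE)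
      show "AE f in measure_pmf fs. measure_pmf.expectation hs (\<lambda>h. X l (h, f) * X l' (h, f)) = (\<Prod>i\<in>K. qf (f i))"
      proof (rule AE_pmfI)
        fix f assume f: "f \<in> set_pmf fs"
        have pt: "X l (h, f) * X l' (h, f) = (\<Prod>i\<in>K. \<Prod>j\<in>{f i l, f i l'}. c (h (i, j)))" for h
        proof -
          have "X l (h, f) * X l' (h, f) = (\<Prod>i\<in>K. c (h (i, f i l)) * c (h (i, f i l')))"
            by (simp add: X_def prod.distrib)
          also have "\<dots> = (\<Prod>i\<in>K. \<Prod>j\<in>{f i l, f i l'}. c (h (i, j)))"
          proof (rule prod.cong[OF refl])
            fix i
            show "c (h (i, f i l)) * c (h (i, f i l')) = (\<Prod>j\<in>{f i l, f i l'}. c (h (i, j)))"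
            proof (cases "f i l = f i l'")
              case True
              then show ?thesis using c01[of "h (i, f i l')"] by auto
            qed simp
          qed
          finally show ?thesis .
        qed
        have "measure_pmf.expectation hs (\<lambda>h. X l (h, f) * X l' (h, f)) =
              measure_pmf.expectation hs (\<lambda>h. \<Prod>i\<in>K. \<Prod>j\<in>{f i l, f i l'}. c (h (i, j)))"
          by (simp add: pt)
        also have "\<dots> = (\<Prod>i\<in>K. (measure_pmf.expectation H c) ^ card {f i l, f i l'})"
          unfolding hs_def by (rule core_hs) (use c0 c1 finK finJ suppJ[OF f _ l] suppJ[OF f _ l'] in auto)
        also have "\<dots> = (\<Prod>i\<in>K. qf (f i))"
          by (intro prod.cong refl) (auto simp: Ec qf_def power2_eq_square)
        finally show "measure_pmf.expectation hs (\<lambda>h. X l (h, f) * X l' (h, f)) = (\<Prod>i\<in>K. qf (f i))" .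
      qed
    qed auto
    also have "\<dots> = (\<Prod>i\<in>K. measure_pmf.expectation (F i) qf)"
      unfolding fs_def
      by (rule expectation_prod_Pi_pmf) (use finK qf0 qf1 in \<open>auto intro: intM\<close>)
    also have "\<dots> = (\<Prod>i\<in>K. q)"
    proof (rule prod.cong[OF refl])
      fix i assume i: "i \<in> K"
      have pw: "map_pmf (\<lambda>f. (f l, f l')) (F i) = pmf_of_set (J \<times> J)"
        using assms(11)[of i] i l l' ll' unfolding pairwise_indep_family_def K_def J_def Ls_def by blast
      have "measure_pmf.expectation (F i) qf =
            measure_pmf.expectation (map_pmf (\<lambda>f. (f l, f l')) (F i)) (\<lambda>(a, b). if a = b then p else p\<^sup>2)"
        by (simp add: qf_def)
      also have "\<dots> = (\<Sum>ab\<in>J \<times> J. (\<lambda>(a, b). if a = b then p else p\<^sup>2) ab) / real (card (J \<times> J))"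
        unfolding pw by (rule integral_pmf_of_set) (use finJ assms(10) in \<open>auto simp: J_def\<close>)
      also have "(\<Sum>ab\<in>J \<times> J. (\<lambda>(a, b). if a = b then p else p\<^sup>2) ab) = (\<Sum>a\<in>J. \<Sum>b\<in>J. if a = b then p else p\<^sup>2)"
        by (simp add: sum.cartesian_product)
      also have "\<dots> = (\<Sum>a\<in>J. \<Sum>b\<in>J. p\<^sup>2 + (if a = b then p - p\<^sup>2 else 0))"
        by (intro sum.cong refl) auto
      also have "\<dots> = (\<Sum>a\<in>J. real m * p\<^sup>2 + (p - p\<^sup>2))"
        by (intro sum.cong refl) (simp add: sum.distrib finJ cardJ)
      also have "\<dots> = real m * (real m * p\<^sup>2 + (p - p\<^sup>2))"
        by (simp add: cardJ)
      also have "real (card (J \<times> J)) = real m * real m"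
        by (simp add: card_cartesian_product cardJ)
      finally have "measure_pmf.expectation (F i) qf = real m * (real m * p\<^sup>2 + (p - p\<^sup>2)) / (real m * real m)" .
      also have "\<dots> = (real m * p\<^sup>2 + (p - p\<^sup>2)) / real m"
        using assms(10) by simp
      also have "\<dots> = q"
        using assms(10) by (simp add: q_def add_divide_distrib)
      finally show "measure_pmf.expectation (F i) qf = q" .
    qed
    also have "\<dots> = q ^ k" by (simp add: cardK)
    finally show ?thesis .
  qed
  have mpos: "0 < real m" using assms(10) by simp
  define t where "t = (1 - p) / (p * real m)"
  have t0: "0 \<le> t" using ppos ple mpos by (simp add: t_def)
  have lnpos: "0 < ln (1 + \<epsilon>)" using assms(8) by simp
  have A: "(1 - p1) / p1 * (real k / ln (1 + \<epsilon>)) \<le> real m"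
  proof -
    have "(1 - p1) / p1 * (real k / ln (1 + \<epsilon>)) \<le> of_int \<lceil>(1 - p1) / p1 * (real k / ln (1 + \<epsilon>))\<rceil>"
      by (rule le_of_int_ceiling)
    also have "\<dots> \<le> of_int (int m)" using assms(9) by (simp only: of_int_le_iff)
    finally show ?thesis by simp
  qed
  have C: "(1 - p1) / p1 * real k \<le> real m * ln (1 + \<epsilon>)"
  proof -
    have eq: "(1 - p1) / p1 * (real k / ln (1 + \<epsilon>)) = ((1 - p1) / p1 * real k) / ln (1 + \<epsilon>)"
      by simp
    have "((1 - p1) / p1 * real k) / ln (1 + \<epsilon>) \<le> real m" using A unfolding eq .
    then show ?thesis by (simp only: pos_divide_le_eq[OF lnpos])
  qed
  have B: "(1 - p) / p \<le> (1 - p1) / p1"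
  proof -
    have "1 / p \<le> 1 / p1" using pge assms(4) by (simp add: frac_le)
    moreover have "(1 - p) / p = 1 / p - 1" using ppos by (simp add: field_simps)
    moreover have "(1 - p1) / p1 = 1 / p1 - 1" using assms(4) by (simp add: field_simps)
    ultimately show ?thesis by simp
  qed
  have kt: "real k * t \<le> ln (1 + \<epsilon>)"
  proof -
    have "real k * t = (1 - p) / p * real k / real m" by (simp add: t_def field_simps)
    also have "\<dots> \<le> (1 - p1) / p1 * real k / real m"
      using B mpos by (intro divide_right_mono mult_right_mono) auto
    also have "\<dots> \<le> ln (1 + \<epsilon>)"
      using C by (simp only: pos_divide_le_eq[OF mpos] mult.commute)
    finally show ?thesis .
  qed
  have qt: "q = p\<^sup>2 * (1 + t)"
    using ppos mpos by (simp add: q_def t_def field_simps power2_eq_square)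
  have qbound: "q ^ k \<le> (1 + \<epsilon>) * p ^ (2 * k)"
  proof -
    have "(1 + t) ^ k \<le> exp t ^ k"
      using t0 by (intro power_mono) (auto simp: exp_ge_add_one_self)
    also have "\<dots> = exp (real k * t)" by (simp add: exp_of_nat_mult)
    also have "\<dots> \<le> exp (ln (1 + \<epsilon>))" using kt by simp
    also have "\<dots> = 1 + \<epsilon>" using assms(8) by simp
    finally have "(1 + t) ^ k \<le> 1 + \<epsilon>" .
    then have "p ^ (2 * k) * (1 + t) ^ k \<le> p ^ (2 * k) * (1 + \<epsilon>)"
      using ppos by (intro mult_left_mono) auto
    moreover have "q ^ k = p ^ (2 * k) * (1 + t) ^ k"
      by (simp add: qt power_mult_distrib power_mult)
    ultimately show ?thesis by (simp add: mult.commute)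
  qed
  have intX: "integrable (measure_pmf M) (X l)" for l
    by (rule intM) (use X0 X1 in auto)
  have intXX: "integrable (measure_pmf M) (\<lambda>\<omega>. X l \<omega> * X l' \<omega>)" for l l'
    by (rule intM) (use X0 X1 in \<open>auto intro: mult_le_one\<close>)
  have Xidem: "X l \<omega> * X l \<omega> = X l \<omega>" for l \<omega>
  proof -
    have "X l \<omega> = (\<Prod>i\<in>K. c (fst \<omega> (i, snd \<omega> i l)) * c (fst \<omega> (i, snd \<omega> i l)))"
      unfolding X_def by (intro prod.cong refl) (use c01 in \<open>metis mult_1 mult_zero_left\<close>)
    then show ?thesis by (simp add: X_def prod.distrib)
  qed
  have EZ: "measure_pmf.expectation M Z = \<mu>"
  proof -
    have "measure_pmf.expectation M Z = (\<Sum>l\<in>Ls. measure_pmf.expectation M (X l))"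
      unfolding Z_def by (rule Bochner_Integration.integral_sum) (use intX in auto)
    also have "\<dots> = (\<Sum>l\<in>Ls. p ^ k)" by (intro sum.cong refl E1)
    also have "\<dots> = \<mu>" by (simp add: cardLs \<mu>_def)
    finally show ?thesis .
  qed
  have EZ2: "measure_pmf.expectation M (\<lambda>\<omega>. (Z \<omega>)\<^sup>2) \<le> \<mu> + (1 + \<epsilon>) * \<mu>\<^sup>2"
  proof -
    have sq: "(Z \<omega>)\<^sup>2 = (\<Sum>l\<in>Ls. \<Sum>l'\<in>Ls. X l \<omega> * X l' \<omega>)" for \<omega>
      by (simp add: Z_def power2_eq_square sum_product)
    have "measure_pmf.expectation M (\<lambda>\<omega>. (Z \<omega>)\<^sup>2)
        = (\<Sum>l\<in>Ls. measure_pmf.expectation M (\<lambda>\<omega>. \<Sum>l'\<in>Ls. X l \<omega> * X l' \<omega>))"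
      unfolding sq by (rule Bochner_Integration.integral_sum) (use intXX in auto)
    also have "\<dots> = (\<Sum>l\<in>Ls. \<Sum>l'\<in>Ls. measure_pmf.expectation M (\<lambda>\<omega>. X l \<omega> * X l' \<omega>))"
      by (intro sum.cong refl Bochner_Integration.integral_sum) (use intXX in auto)
    also have "\<dots> \<le> (\<Sum>l\<in>Ls. \<Sum>l'\<in>Ls. (if l = l' then p ^ k else 0) + (1 + \<epsilon>) * p ^ (2 * k))"
    proof (intro sum_mono)
      fix l l' assume l: "l \<in> Ls" and l': "l' \<in> Ls"
      show "measure_pmf.expectation M (\<lambda>\<omega>. X l \<omega> * X l' \<omega>) \<le> (if l = l' then p ^ k else 0) + (1 + \<epsilon>) * p ^ (2 * k)"
      proof (cases "l = l'")
        case True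
        then show ?thesis using E1[OF l] ppos assms(8) by (simp add: Xidem)
      next
        case False
        then show ?thesis using E2[OF l l' False] qbound by simp
      qed
    qed
    also have "\<dots> = (\<Sum>l\<in>Ls. p ^ k + real L * ((1 + \<epsilon>) * p ^ (2 * k)))"
      by (intro sum.cong refl) (simp add: sum.distrib finLs cardLs)
    also have "\<dots> = \<mu> + (1 + \<epsilon>) * \<mu>\<^sup>2"
      by (simp add: cardLs \<mu>_def power_mult_distrib power_mult algebra_simps power2_eq_square)
    finally show ?thesis .
  qed
  have Z0: "0 \<le> Z \<omega>" and ZL: "Z \<omega> \<le> real L" for \<omega>
  proof -
    show "0 \<le> Z \<omega>" unfolding Z_def by (intro sum_nonneg X0)
    have "Z \<omega> \<le> (\<Sum>l\<in>Ls. 1)" unfolding Z_def by (intro sum_mono X1)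
    then show "Z \<omega> \<le> real L" by (simp add: cardLs)
  qed
  have intZ: "integrable (measure_pmf M) Z"
    by (rule intM) (use Z0 ZL in auto)
  have intZ2: "integrable (measure_pmf M) (\<lambda>\<omega>. (Z \<omega>)\<^sup>2)"
  proof (rule integrable_pmf_bounded[where B="real L ^ 2"])
    fix \<omega> show "\<bar>(Z \<omega>)\<^sup>2\<bar> \<le> real L ^ 2"
      using power_mono[OF ZL[of \<omega>] Z0[of \<omega>], of 2] by simp
  qed
  have mu0: "0 \<le> \<mu>" using ppos by (simp add: \<mu>_def)
  define a where "a = 1 / (1 + (1 + \<epsilon>) * \<mu>)"
  have den: "0 < 1 + (1 + \<epsilon>) * \<mu>" using mu0 assms(8) by (simp add: add_pos_nonneg)
  have a0: "0 \<le> a" using den by (simp add: a_def)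
  have EZ0: "Z \<omega> = 0" if "\<omega> \<in> E" for \<omega>
  proof -
    have "X l \<omega> = 0" if l: "l \<in> Ls" for l
    proof -
      obtain i where i: "i \<in> K" "fst \<omega> (i, snd \<omega> i l) x \<noteq> fst \<omega> (i, snd \<omega> i l) y"
        using \<open>\<omega> \<in> E\<close> l unfolding E_def by (auto simp: case_prod_unfold)
      then have "c (fst \<omega> (i, snd \<omega> i l)) = 0" by (simp add: c_def)
      then show ?thesis unfolding X_def using i(1) finK by (simp add: prod_zero_iff) blast
    qed
    then show ?thesis unfolding Z_def by simp
  qed
  have pointwise: "indicator E \<omega> \<le> 1 - 2 * a * Z \<omega> + a\<^sup>2 * (Z \<omega>)\<^sup>2" for \<omega>
  proof (cases "\<omega> \<in> E")
    case True
    then show ?thesis using EZ0[OF True] by simp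
  next
    case False
    have "0 \<le> (1 - a * Z \<omega>)\<^sup>2" by simp
    also have "(1 - a * Z \<omega>)\<^sup>2 = 1 - 2 * a * Z \<omega> + a\<^sup>2 * (Z \<omega>)\<^sup>2"
      by (simp add: power2_eq_square algebra_simps)
    finally show ?thesis using False by simp
  qed
  have "measure_pmf.prob M E = measure_pmf.expectation M (indicator E)"
    by simp
  also have "\<dots> \<le> measure_pmf.expectation M (\<lambda>\<omega>. 1 - 2 * a * Z \<omega> + a\<^sup>2 * (Z \<omega>)\<^sup>2)"
  proof (rule integral_mono)
    show "integrable (measure_pmf M) (indicat_real E)"
      by (rule integrable_pmf_bounded[where B=1]) (auto simp: indicator_def)
  qed (use pointwise intZ intZ2 in auto)
  also have "\<dots> = 1 - 2 * a * measure_pmf.expectation M Z + a\<^sup>2 * measure_pmf.expectation M (\<lambda>\<omega>. (Z \<omega>)\<^sup>2)"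
    using intZ intZ2 by simp
  also have "\<dots> \<le> 1 - 2 * a * \<mu> + a\<^sup>2 * (\<mu> + (1 + \<epsilon>) * \<mu>\<^sup>2)"
    unfolding EZ using EZ2 a0 by (intro add_left_mono mult_left_mono) auto
  also have "\<dots> = (1 + \<epsilon> * \<mu>) / (1 + (1 + \<epsilon>) * \<mu>)"
  proof -
    have aD: "a * (1 + (1 + \<epsilon>) * \<mu>) = 1" using den by (simp add: a_def)
    have "a\<^sup>2 * (\<mu> + (1 + \<epsilon>) * \<mu>\<^sup>2) = a * \<mu> * (a * (1 + (1 + \<epsilon>) * \<mu>))"
      by (simp add: power2_eq_square algebra_simps)
    also have "\<dots> = a * \<mu>" using aD by simp
    finally have "1 - 2 * a * \<mu> + a\<^sup>2 * (\<mu> + (1 + \<epsilon>) * \<mu>\<^sup>2) = 1 - a * \<mu>" by simp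
    also have "\<dots> = (1 + \<epsilon> * \<mu>) / (1 + (1 + \<epsilon>) * \<mu>)"
      using den by (simp add: a_def field_simps)
    finally show ?thesis .
  qed
  finally have main: "measure_pmf.prob M E \<le> (1 + \<epsilon> * \<mu>) / (1 + (1 + \<epsilon>) * \<mu>)" .
  then show ?thesis
    unfolding Let_def M_def hs_def fs_def E_def K_def J_def Ls_def \<mu>_def p_def .
qed
end
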